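(* If $g\in\mathcal{G}$ is $\mathbb{S}$-nearly periodic, then for every $\delta>0$ there exists an $\mathbb{S}$-normal function $h\in\mathcal{G}$ that is not 1-pass tractable and satisfies $\Theta(g,h)\le\delta$.
   Context: Streams: a stream of length $m$ with domain $[n]$ is a list $D=\langle (i_1,\delta_1),\dots,(i_m,\delta_m)\rangle$ with $i_j\in[n]$, $\delta_j\in\mathbb{Z}$; its frequency vector $V(D)=v\in\mathbb{Z}^n$ has $v_i=\sum_{j:i_j=i}\delta_j$. (Turnstile model) there is $M\in\mathbb{N}$ such that the frequency vector of $D$ and of every prefix of $D$ lies in $\{-M,\dots,M\}^n$; throughout $M$ is polynomial in $n$. $\mathcal{D}(n,m)$ is the set of such streams with domain $[n]$ and length at most $m$. A $p$-pass algorithm reads the stream $p$ times in order and may use randomness. For $g:\mathbb{Z}_{\ge0}\to\mathbb{R}$ and $v\in\mathbb{Z}^n$ let $g(v)=\sum_{i=1}^n g(|v_i|)$. The problem $(g,\epsilon)$-SUM is to output $\hat G$ with $P\big((1-\epsilon)g(V(D))\le \hat G\le (1+\epsilon)g(V(D))\big)\ge 2/3$. A function $f:\mathbb{R}_{\ge0}\to\mathbb{R}_{\ge0}$ is sub-polynomial if for every $\alpha>0$, $\lim_{x\to\infty}x^\alpha f(x)=\infty$ and $\lim_{x\to\infty}x^{-\alpha}f(x)=0$. $g$ is $p$-pass tractable if for every sub-polynomial $h$ and every $\epsilon\ge 1/h(nM)$ there exist a sub-polynomial $h^*$ and a $p$-pass algorithm (with oracle access to $g$) that solves $(g,\epsilon)$-SUM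 for all streams in $\mathcal{D}(n,m)$ and all $n,M\ge1$ using at most $h^*(nM)$ bits of space in the worst case. $\mathcal{G}=\{g:\mathbb{Z}_{\ge0}\to\mathbb{R}: g(0)=0,\ g(1)=1,\ g(x)>0\ \forall x>0\}$. For $g,h\in\mathcal{G}$, $\Theta(g,h)=\sup_{x\in\mathbb{N}}|\log g(x)-\log h(x)|$. For a set $\mathcal{S}$ of functions, $g$ is $\mathcal{S}$-nearly periodic if (1) there is $\alpha>0$ such that for every $N>0$ there exist $x,y\in\mathbb{N}$, $x<y$, $y\ge N$ with $g(y)\le g(x)/y^\alpha$ (such $y$ is called an $\alpha$-period of $g$); and (2) for every $\alpha>0$ and every $h\in\mathcal{S}$ there is $N_1>0$ such that for all $\alpha$-periods $y\ge N_1$ and all $x<y$ with $g(y)y^\alpha\le g(x)$, $|g(x+y)-g(x)|\le \min\{g(x),g(x+y)\}h(y)$. $g$ is $\mathcal{S}$-normal if it is not $\mathcal{S}$-nearly periodic. $\mathbb{S}$ denotes the set of non-increasing sub-polynomial functions on $\mathbb{Z}_{\ge0}$. *)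

theory Defs
  imports "HOL-Probability.Probability"
begin

definition subpoly :: "(real \<Rightarrow> real) \<Rightarrow> bool" where
  "subpoly f \<longleftrightarrow> (\<forall>x\<ge>0. f x \<ge> 0) \<and>
     (\<forall>\<alpha>>0. filterlim (\<lambda>x. x powr \<alpha> * f x) at_top at_top \<and>
             ((\<lambda>x. x powr (-\<alpha>) * f x) \<longlongrightarrow> 0) at_top)"

definition S_class :: "(nat \<Rightarrow> real) set" where
  "S_class = {f. (\<forall>x. f x \<ge> 0) \<and> antimono f \<and>
     (\<forall>\<alpha>>0. filterlim (\<lambda>x. real x powr \<alpha> * f x) at_top sequentially \<and>
             (\<lambda>x. real x powr (-\<alpha>) * f x) \<longlonglongrightarrow> 0)}"

definition G_class :: "(nat \<Rightarrow> real) set" where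
  "G_class = {g. g 0 = 0 \<and> g 1 = 1 \<and> (\<forall>x>0. g x > 0)}"

definition Theta :: "(nat \<Rightarrow> real) \<Rightarrow> (nat \<Rightarrow> real) \<Rightarrow> ereal" where
  "Theta g h = (SUP x\<in>{1..}. ereal \<bar>ln (g x) - ln (h x)\<bar>)"

definition alpha_period :: "(nat \<Rightarrow> real) \<Rightarrow> real \<Rightarrow> nat \<Rightarrow> bool" where
  "alpha_period g \<alpha> y \<longleftrightarrow> (\<exists>x<y. g y \<le> g x / real y powr \<alpha>)"

definition nearly_periodic :: "(nat \<Rightarrow> real) set \<Rightarrow> (nat \<Rightarrow> real) \<Rightarrow> bool" where
  "nearly_periodic SS g \<longleftrightarrow>
     (\<exists>\<alpha>>0. \<forall>N>0. \<exists>x y. x < y \<and> real y \<ge> N \<and> g y \<le> g x / real y powr \<alpha>) \<and>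
     (\<forall>\<alpha>>0. \<forall>h\<in>SS. \<exists>N1>0. \<forall>y x. alpha_period g \<alpha> y \<and> real y \<ge> N1 \<and> x < y \<and>
          g y * real y powr \<alpha> \<le> g x \<longrightarrow>
          \<bar>g (x + y) - g x\<bar> \<le> min (g x) (g (x + y)) * h y)"

definition normal :: "(nat \<Rightarrow> real) set \<Rightarrow> (nat \<Rightarrow> real) \<Rightarrow> bool" where
  "normal SS g \<longleftrightarrow> \<not> nearly_periodic SS g"

text \<open>A stream is a list of updates (i, delta); the frequency vector is indexed by nat.\<close>
definition freq :: "(nat \<times> int) list \<Rightarrow> nat \<Rightarrow> int" where
  "freq D i = sum_list (map snd (filter (\<lambda>p. fst p = i) D))"

text \<open>Turnstile streams with domain [n] = {1..n} and bound M (any length).\<close>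
definition valid_stream :: "nat \<Rightarrow> nat \<Rightarrow> (nat \<times> int) list \<Rightarrow> bool" where
  "valid_stream n M D \<longleftrightarrow> (\<forall>p\<in>set D. fst p \<in> {1..n}) \<and>
     (\<forall>k\<le>length D. \<forall>i. \<bar>freq (take k D) i\<bar> \<le> int M)"

definition gsum :: "(nat \<Rightarrow> real) \<Rightarrow> nat \<Rightarrow> (nat \<times> int) list \<Rightarrow> real" where
  "gsum g n D = (\<Sum>i=1..n. g (nat \<bar>freq D i\<bar>))"

text \<open>A one-pass algorithm: a randomized automaton with states in nat, an initial state
  distribution, a randomized transition per update, and a randomized output.
  Its memory is the set Q of states it may occupy; it uses at most s bits iff
  card Q \<le> 2 powr s.\<close>
record alg1 =
  a_init :: "nat pmf"
  a_step :: "nat \<Rightarrow> nat \<times> int \<Rightarrow> nat pmf"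
  a_out :: "nat \<Rightarrow> real pmf"

definition run_alg :: "alg1 \<Rightarrow> (nat \<times> int) list \<Rightarrow> real pmf" where
  "run_alg A D = bind_pmf (foldl (\<lambda>s p. bind_pmf s (\<lambda>q. a_step A q p)) (a_init A) D) (a_out A)"

definition space_bounded :: "alg1 \<Rightarrow> real \<Rightarrow> bool" where
  "space_bounded A s \<longleftrightarrow> (\<exists>Q. finite Q \<and> real (card Q) \<le> 2 powr s \<and>
     set_pmf (a_init A) \<subseteq> Q \<and> (\<forall>q\<in>Q. \<forall>p. set_pmf (a_step A q p) \<subseteq> Q))"

definition solves_sum :: "alg1 \<Rightarrow> (nat \<Rightarrow> real) \<Rightarrow> real \<Rightarrow> nat \<Rightarrow> nat \<Rightarrow> bool" where
  "solves_sum A g \<epsilon> n M \<longleftrightarrow> (\<forall>D. valid_stream n M D \<longrightarrow>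
     measure_pmf.prob (run_alg A D)
       {G. (1 - \<epsilon>) * gsum g n D \<le> G \<and> G \<le> (1 + \<epsilon>) * gsum g n D} \<ge> 2/3)"

definition one_pass_tractable :: "(nat \<Rightarrow> real) \<Rightarrow> bool" where
  "one_pass_tractable g \<longleftrightarrow>
     (\<forall>h \<epsilon>. subpoly h \<and> (\<forall>n M. \<epsilon> n M \<ge> 1 / h (real (n * M))) \<longrightarrow>
        (\<exists>hs. subpoly hs \<and> (\<forall>n\<ge>1. \<forall>M\<ge>1. \<exists>A.
           space_bounded A (hs (real (n * M))) \<and> solves_sum A g (\<epsilon> n M) n M)))"

end

theory Submission
  imports Defs "HOL-Real_Asymp.Real_Asymp"
begin

lemma prob_bind_finite:
  fixes M :: "'a pmf" and N :: "'a \<Rightarrow> 'b pmf"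
  assumes "finite Q" "set_pmf M \<subseteq> Q"
  shows "measure_pmf.prob (bind_pmf M N) X = (\<Sum>q\<in>Q. pmf M q * measure_pmf.prob (N q) X)"
proof -
  have "ennreal (measure_pmf.prob (bind_pmf M N) X) = emeasure (bind_pmf M N) X"
    by (simp add: measure_pmf.emeasure_eq_measure)
  also have "\<dots> = (\<integral>\<^sup>+x. emeasure (N x) X \<partial>M)" by simp
  also have "\<dots> = (\<Sum>x\<in>Q. emeasure (N x) X * pmf M x)"
    using assms by (intro nn_integral_measure_pmf_support) (auto simp: set_pmf_eq)
  also have "\<dots> = (\<Sum>x\<in>Q. ennreal (pmf M x * measure_pmf.prob (N x) X))"
    by (intro sum.cong refl) (simp add: measure_pmf.emeasure_eq_measure ennreal_mult' mult.commute)
  also have "\<dots> = ennreal (\<Sum>x\<in>Q. pmf M x * measure_pmf.prob (N x) X)"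
    by (rule sum_ennreal) simp
  finally show ?thesis by (simp add: sum_nonneg)
qed

lemma binom_bound:
  "(\<Sum>k\<le>2*m. ((5*m) choose k)) * 2^(2*m) * 3^(3*m) \<le> (5::nat)^(5*m)"
proof -
  have "(5::nat)^(5*m) = (2+3)^(5*m)" by simp
  also have "\<dots> = (\<Sum>k\<le>5*m. ((5*m) choose k) * 2^k * 3^(5*m-k))"
    using binomial_ring[of "2::nat" 3 "5*m"] by simp
  also have "\<dots> \<ge> (\<Sum>k\<le>2*m. ((5*m) choose k) * 2^k * 3^(5*m-k))"
    by (intro sum_mono2) auto
  finally have A: "(\<Sum>k\<le>2*m. ((5*m) choose k) * 2^k * 3^(5*m-k)) \<le> (5::nat)^(5*m)" .
  have "(\<Sum>k\<le>2*m. ((5*m) choose k)) * 2^(2*m) * 3^(3*m) = (\<Sum>k\<le>2*m. ((5*m) choose k) * (2^(2*m) * 3^(3*m)))"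
    by (simp add: sum_distrib_right mult.assoc)
  also have "\<dots> \<le> (\<Sum>k\<le>2*m. ((5*m) choose k) * 2^k * 3^(5*m-k))"
  proof (intro sum_mono)
    fix k assume "k \<in> {..2*m}"
    then have k: "k \<le> 2*m" by simp
    have "(2::nat)^(2*m) = 2^k * 2^(2*m-k)" using k by (simp flip: power_add)
    moreover have "(3::nat)^(5*m-k) = 3^(3*m) * 3^(2*m-k)" using k by (simp flip: power_add)
    moreover have "(2::nat)^(2*m-k) \<le> 3^(2*m-k)" by (rule power_mono) auto
    ultimately show "((5*m) choose k) * (2^(2*m) * 3^(3*m)) \<le> ((5*m) choose k) * 2^k * 3^(5*m-k)"
      by (simp add: mult_le_mono)
  qed
  finally show ?thesis using A by linarith
qed

lemma card_small_subsets:
  "card {U. U \<subseteq> {1..n::nat} \<and> card U \<le> r} \<le> (\<Sum>k\<le>r. n choose k)"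
proof -
  have "{U. U \<subseteq> {1..n::nat} \<and> card U \<le> r} = (\<Union>k\<in>{..r}. {U. U \<subseteq> {1..n} \<and> card U = k})" by auto
  then have "card {U. U \<subseteq> {1..n::nat} \<and> card U \<le> r} \<le> (\<Sum>k\<le>r. card {U. U \<subseteq> {1..n} \<and> card U = k})"
    by (simp add: card_UN_le)
  also have "\<dots> = (\<Sum>k\<le>r. n choose k)" by (simp add: n_subsets)
  finally show ?thesis .
qed

lemma card_filter_sum: "finite I \<Longrightarrow> (\<Sum>i\<in>I. if P i then (1::real) else 0) = real (card {i\<in>I. P i})"
  by (simp add: sum.inter_filter[symmetric])

lemma LB:
  fixes Q :: "'q set" and \<mu> :: "nat set \<Rightarrow> 'q \<Rightarrow> real" and \<beta> :: "nat \<Rightarrow> 'q \<Rightarrow> bool \<Rightarrow> real"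
  assumes finQ: "finite Q"
  and \<mu>nn: "\<And>S q. 0 \<le> \<mu> S q"
  and \<mu>sum: "\<And>S. S \<subseteq> {1..n} \<Longrightarrow> (\<Sum>q\<in>Q. \<mu> S q) = 1"
  and \<beta>nn: "\<And>i q v. 0 \<le> \<beta> i q v"
  and \<beta>le: "\<And>i q. \<beta> i q True + \<beta> i q False \<le> 1"
  and succ: "\<And>S i. S \<subseteq> {1..n} \<Longrightarrow> i \<in> {1..n} \<Longrightarrow> (\<Sum>q\<in>Q. \<mu> S q * \<beta> i q (i\<in>S)) \<ge> 2/3"
  and n: "n = 5*m"
  shows "(2::real)^n \<le> 6 * card Q * card {U. U \<subseteq> {1..n} \<and> card U \<le> 2*m}"
proof -
  define P where "P = Pow {1..n}"
  have finP: "finite P" unfolding P_def by simp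
  have cardP: "card P = 2^n" unfolding P_def by (simp add: card_Pow)
  define W where "W q i v = (\<Sum>S\<in>P. if (i\<in>S) = v then \<mu> S q else 0)" for q i v
  define d where "d q = {i\<in>{1..n}. W q i True \<ge> W q i False}" for q
  define dis where "dis S T = card {i\<in>{1..n}. (i\<in>S) \<noteq> (i\<in>T)}" for S T
  define agr where "agr S T = card {i\<in>{1..n}. (i\<in>S) = (i\<in>T)}" for S T
  have agrdis: "real (agr S T) + real (dis S T) = n" for S T
  proof -
    define A where "A = {i\<in>{1..n}. (i\<in>S) = (i\<in>T)}"
    define B where "B = {i\<in>{1..n}. (i\<in>S) \<noteq> (i\<in>T)}"
    have U: "A \<union> B = {1..n}" unfolding A_def B_def by auto
    have C: "card (A \<union> B) = card A + card B"
      unfolding A_def B_def by (intro card_Un_disjoint) auto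
    have "card (A \<union> B) = n" unfolding U by simp
    with C have "card A + card B = n" by linarith
    then show ?thesis unfolding agr_def dis_def A_def[symmetric] B_def[symmetric] by (metis of_nat_add)
  qed
  have Wnn: "0 \<le> W q i v" for q i v unfolding W_def by (intro sum_nonneg) (auto simp: \<mu>nn)
  have step1: "(\<Sum>S\<in>P. \<mu> S q * \<beta> i q (i\<in>S)) \<le> (\<Sum>S\<in>P. \<mu> S q * (if (i\<in>S) = (i \<in> d q) then 1 else 0))"
    if "i \<in> {1..n}" for q i
  proof -
    have L: "(\<Sum>S\<in>P. \<mu> S q * \<beta> i q (i\<in>S)) = \<beta> i q True * W q i True + \<beta> i q False * W q i False"
      unfolding W_def sum_distrib_left sum.distrib[symmetric]
      by (intro sum.cong refl) auto
    have R: "(\<Sum>S\<in>P. \<mu> S q * (if (i\<in>S) = (i \<in> d q) then 1 else 0)) = W q i (i \<in> d q)"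
      unfolding W_def by (intro sum.cong refl) auto
    show ?thesis
    proof (cases "W q i True \<ge> W q i False")
      case True
      then have "i \<in> d q" using that unfolding d_def by auto
      have "\<beta> i q True * W q i True + \<beta> i q False * W q i False \<le> \<beta> i q True * W q i True + \<beta> i q False * W q i True"
        using True \<beta>nn by (intro add_left_mono mult_left_mono) auto
      also have "\<dots> \<le> W q i True" using mult_right_mono[OF \<beta>le[of i q] Wnn[of q i True]] by (simp add: distrib_right)
      finally show ?thesis using L R \<open>i \<in> d q\<close> by simp
    next
      case False
      then have "i \<notin> d q" unfolding d_def by auto
      have "\<beta> i q True * W q i True + \<beta> i q False * W q i False \<le> \<beta> i q True * W q i False + \<beta> i q False * W q i False"
        using False \<beta>nn by (intro add_right_mono mult_left_mono) auto
      also have "\<dots> \<le> W q i False" using mult_right_mono[OF \<beta>le[of i q] Wnn[of q i False]] by (simp add: distrib_right)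
      finally show ?thesis using L R \<open>i \<notin> d q\<close> by simp
    qed
  qed
  have "(\<Sum>S\<in>P. \<Sum>i\<in>{1..n}. (2::real)/3) \<le> (\<Sum>S\<in>P. \<Sum>i\<in>{1..n}. \<Sum>q\<in>Q. \<mu> S q * \<beta> i q (i\<in>S))"
    using succ unfolding P_def by (intro sum_mono) auto
  also have "\<dots> = (\<Sum>S\<in>P. \<Sum>q\<in>Q. \<Sum>i\<in>{1..n}. \<mu> S q * \<beta> i q (i\<in>S))"
    by (intro sum.cong refl) (rule sum.swap)
  also have "\<dots> = (\<Sum>q\<in>Q. \<Sum>S\<in>P. \<Sum>i\<in>{1..n}. \<mu> S q * \<beta> i q (i\<in>S))"
    by (rule sum.swap)
  also have "\<dots> = (\<Sum>q\<in>Q. \<Sum>i\<in>{1..n}. \<Sum>S\<in>P. \<mu> S q * \<beta> i q (i\<in>S))"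
    by (intro sum.cong refl) (rule sum.swap)
  also have "\<dots> \<le> (\<Sum>q\<in>Q. \<Sum>i\<in>{1..n}. \<Sum>S\<in>P. \<mu> S q * (if (i\<in>S) = (i \<in> d q) then 1 else 0))"
    by (rule sum_mono, rule sum_mono, rule step1) auto
  also have "\<dots> = (\<Sum>q\<in>Q. \<Sum>S\<in>P. \<Sum>i\<in>{1..n}. \<mu> S q * (if (i\<in>S) = (i \<in> d q) then 1 else 0))"
    by (intro sum.cong refl) (rule sum.swap)
  also have "\<dots> = (\<Sum>S\<in>P. \<Sum>q\<in>Q. \<Sum>i\<in>{1..n}. \<mu> S q * (if (i\<in>S) = (i \<in> d q) then 1 else 0))"
    by (rule sum.swap)
  also have "\<dots> = (\<Sum>S\<in>P. \<Sum>q\<in>Q. \<mu> S q * (\<Sum>i\<in>{1..n}. (if (i\<in>S) = (i \<in> d q) then 1 else 0)))"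
    by (simp add: sum_distrib_left)
  also have "\<dots> = (\<Sum>S\<in>P. \<Sum>q\<in>Q. \<mu> S q * real (agr S (d q)))"
    unfolding agr_def by (simp add: card_filter_sum)
  finally have A1: "2^n * n * (2/3) \<le> (\<Sum>S\<in>P. \<Sum>q\<in>Q. \<mu> S q * real (agr S (d q)))"
    using cardP by simp
  have tot: "(\<Sum>S\<in>P. \<Sum>q\<in>Q. \<mu> S q) = 2^n"
    using \<mu>sum cardP unfolding P_def by simp
  have "(\<Sum>S\<in>P. \<Sum>q\<in>Q. \<mu> S q * real (agr S (d q))) + (\<Sum>S\<in>P. \<Sum>q\<in>Q. \<mu> S q * real (dis S (d q)))
      = (\<Sum>S\<in>P. \<Sum>q\<in>Q. \<mu> S q * n)"
    unfolding sum.distrib[symmetric] by (intro sum.cong refl) (simp add: agrdis distrib_left[symmetric])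
  also have "\<dots> = 2^n * n" using tot by (simp add: sum_distrib_right[symmetric])
  finally have A2: "(\<Sum>S\<in>P. \<Sum>q\<in>Q. \<mu> S q * real (dis S (d q))) \<le> 2^n * n / 3" using A1 by simp
  have "(\<Sum>S\<in>P. \<Sum>q\<in>Q. \<mu> S q * (if dis S (d q) \<le> 2*m then 0 else real (2*m+1)))
     \<le> (\<Sum>S\<in>P. \<Sum>q\<in>Q. \<mu> S q * real (dis S (d q)))"
    by (intro sum_mono mult_left_mono) (auto simp: \<mu>nn)
  also have "\<dots> \<le> 2^n * (5*m) / 3" using A2 n by simp
  finally have A3': "(\<Sum>S\<in>P. \<Sum>q\<in>Q. \<mu> S q * (if dis S (d q) \<le> 2*m then 0 else real (2*m+1))) \<le> 2^n * (5*m) / 3" .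
  have eqA: "(\<Sum>S\<in>P. \<Sum>q\<in>Q. \<mu> S q * (if dis S (d q) \<le> 2*m then 0 else real (2*m+1)))
     = real (2*m+1) * (\<Sum>S\<in>P. \<Sum>q\<in>Q. \<mu> S q * (if dis S (d q) \<le> 2*m then 0 else 1))"
    unfolding sum_distrib_left by (intro sum.cong refl) auto
  have A3: "real (2*m+1) * (\<Sum>S\<in>P. \<Sum>q\<in>Q. \<mu> S q * (if dis S (d q) \<le> 2*m then 0 else 1)) \<le> 2^n * (5*m) / 3"
    using A3' eqA by simp
  have A4: "(\<Sum>S\<in>P. \<Sum>q\<in>Q. \<mu> S q * (if dis S (d q) \<le> 2*m then 0 else 1)) \<le> 2^n * 5 / 6"
  proof -
    have "2^n * (5*m) / 3 \<le> real (2*m+1) * (2^n * 5 / 6)" by (simp add: field_simps)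
    with A3 have "real (2*m+1) * (\<Sum>S\<in>P. \<Sum>q\<in>Q. \<mu> S q * (if dis S (d q) \<le> 2*m then 0 else 1)) \<le> real (2*m+1) * (2^n * 5 / 6)"
      by linarith
    then show ?thesis by (subst (asm) mult_le_cancel_left_pos) auto
  qed
  have "(\<Sum>S\<in>P. \<Sum>q\<in>Q. \<mu> S q * (if dis S (d q) \<le> 2*m then 1 else 0)) + (\<Sum>S\<in>P. \<Sum>q\<in>Q. \<mu> S q * (if dis S (d q) \<le> 2*m then 0 else 1))
     = 2^n" unfolding tot[symmetric] sum.distrib[symmetric] by (intro sum.cong refl) (auto simp: distrib_left[symmetric])
  with A4 have A5: "2^n / 6 \<le> (\<Sum>S\<in>P. \<Sum>q\<in>Q. \<mu> S q * (if dis S (d q) \<le> 2*m then 1 else 0))" by simp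
  define B where "B = card {U. U \<subseteq> {1..n} \<and> card U \<le> 2*m}"
  have ballc: "card {S\<in>P. dis S T \<le> 2*m} \<le> B" for T
  proof -
    have "inj_on (\<lambda>S. {i\<in>{1..n}. (i\<in>S) \<noteq> (i\<in>T)}) {S\<in>P. dis S T \<le> 2*m}"
    proof (rule inj_onI)
      fix S S' assume S: "S \<in> {S\<in>P. dis S T \<le> 2*m}" and S': "S' \<in> {S\<in>P. dis S T \<le> 2*m}"
        and eq: "{i\<in>{1..n}. (i\<in>S) \<noteq> (i\<in>T)} = {i\<in>{1..n}. (i\<in>S') \<noteq> (i\<in>T)}"
      show "S = S'"
      proof (rule set_eqI)
        fix i show "i \<in> S \<longleftrightarrow> i \<in> S'"
        proof (cases "i \<in> {1..n}")
          case True
          have "(i \<in> {i\<in>{1..n}. (i\<in>S) \<noteq> (i\<in>T)}) = (i \<in> {i\<in>{1..n}. (i\<in>S') \<noteq> (i\<in>T)})"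
            by (simp only: eq)
          then show ?thesis using True by auto
        next
          case False then show ?thesis using S S' unfolding P_def by auto
        qed
      qed
    qed
    moreover have "(\<lambda>S. {i\<in>{1..n}. (i\<in>S) \<noteq> (i\<in>T)}) ` {S\<in>P. dis S T \<le> 2*m} \<subseteq> {U. U \<subseteq> {1..n} \<and> card U \<le> 2*m}"
      unfolding dis_def by auto
    ultimately show ?thesis unfolding B_def by (intro card_inj_on_le) auto
  qed
  have \<mu>le1: "\<mu> S q \<le> 1" if "S \<in> P" "q \<in> Q" for S q
  proof -
    have "\<mu> S q \<le> (\<Sum>q\<in>Q. \<mu> S q)" using that finQ \<mu>nn by (intro member_le_sum) auto
    then show ?thesis using \<mu>sum that unfolding P_def by auto
  qed
  have "(\<Sum>S\<in>P. \<Sum>q\<in>Q. \<mu> S q * (if dis S (d q) \<le> 2*m then 1 else 0))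
      = (\<Sum>q\<in>Q. \<Sum>S\<in>{S\<in>P. dis S (d q) \<le> 2*m}. \<mu> S q)"
    by (subst sum.swap) (simp add: sum.inter_filter finP if_distrib cong: if_cong)
  also have "\<dots> \<le> (\<Sum>q\<in>Q. \<Sum>S\<in>{S\<in>P. dis S (d q) \<le> 2*m}. 1)"
    using \<mu>le1 by (intro sum_mono) auto
  also have "\<dots> \<le> (\<Sum>q\<in>Q. real B)"
    using ballc by (intro sum_mono) auto
  also have "\<dots> = card Q * B" by simp
  finally show ?thesis using A5 unfolding B_def by simp
qed

definition st :: "alg1 \<Rightarrow> (nat \<times> int) list \<Rightarrow> nat pmf" where
  "st A D = foldl (\<lambda>s p. bind_pmf s (\<lambda>q. a_step A q p)) (a_init A) D"

lemma st_snoc: "st A (D @ [p]) = bind_pmf (st A D) (\<lambda>q. a_step A q p)"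
  unfolding st_def by simp

lemma run_alg_snoc: "run_alg A (D @ [p]) = bind_pmf (st A D) (\<lambda>q. bind_pmf (a_step A q p) (a_out A))"
  unfolding run_alg_def st_def by (simp add: bind_assoc_pmf)

lemma st_support:
  assumes "set_pmf (a_init A) \<subseteq> Q" "\<forall>q\<in>Q. \<forall>p. set_pmf (a_step A q p) \<subseteq> Q"
  shows "set_pmf (st A D) \<subseteq> Q"
proof (induction D rule: rev_induct)
  case Nil then show ?case using assms by (simp add: st_def)
next
  case (snoc p D) show ?case unfolding st_snoc set_bind_pmf using snoc.IH assms(2) by blast
qed

lemma freq_alt: "freq D j = sum_list (map (\<lambda>p. if fst p = j then snd p else 0) D)"
  unfolding freq_def by (simp add: sum_list_map_filter')

lemma freq_append: "freq (D1 @ D2) j = freq D1 j + freq D2 j"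
  unfolding freq_def by simp

lemma freq_nonneg: "\<forall>p\<in>set D. snd p \<ge> 0 \<Longrightarrow> freq D j \<ge> 0"
  unfolding freq_def by (intro sum_list_nonneg) auto

definition DS :: "nat \<Rightarrow> nat set \<Rightarrow> (nat \<times> int) list" where
  "DS y S = map (\<lambda>k. (k, int y)) (sorted_list_of_set S)"

lemma freq_DS: "finite S \<Longrightarrow> freq (DS y S) j = (if j \<in> S then int y else 0)"
proof -
  assume fin: "finite S"
  have "freq (DS y S) j = sum_list (map (\<lambda>k. if k = j then int y else 0) (sorted_list_of_set S))"
    unfolding freq_alt DS_def by (simp add: o_def cong: if_cong)
  also have "\<dots> = (\<Sum>k\<in>set (sorted_list_of_set S). if k = j then int y else 0)"
    by (rule sum_list_distinct_conv_sum_set) simp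
  also have "\<dots> = (if j \<in> S then int y else 0)" using fin by simp
  finally show ?thesis .
qed

lemma freq_D: "finite S \<Longrightarrow> freq (DS y S @ [(i, int x)]) j = int ((if j \<in> S then y else 0) + (if j = i then x else 0))"
  by (simp add: freq_append freq_DS) (simp add: freq_def)

lemma valid_D:
  assumes "S \<subseteq> {1..n}" "i \<in> {1..n}"
  shows "valid_stream n (x+y) (DS y S @ [(i, int x)])"
proof -
  have fin: "finite S" using assms finite_subset by blast
  let ?D = "DS y S @ [(i, int x)]"
  have nn: "\<forall>p\<in>set D'. snd p \<ge> 0" if "set D' \<subseteq> set ?D" for D'
    using that by (auto simp: DS_def)
  show ?thesis unfolding valid_stream_def
  proof (intro conjI allI impI ballI)
    fix p assume "p \<in> set ?D" then show "fst p \<in> {1..n}" using assms fin by (auto simp: DS_def)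
  next
    fix k j assume "k \<le> length ?D"
    have "freq ?D j = freq (take k ?D) j + freq (drop k ?D) j"
      by (metis append_take_drop_id freq_append)
    moreover have "freq (take k ?D) j \<ge> 0" by (intro freq_nonneg nn set_take_subset)
    moreover have "freq (drop k ?D) j \<ge> 0" by (intro freq_nonneg nn set_drop_subset)
    moreover have "freq ?D j \<le> int (x+y)" using fin by (simp add: freq_D)
    ultimately show "\<bar>freq (take k ?D) j\<bar> \<le> int (x+y)" by linarith
  qed
qed

lemma gsum_D:
  assumes "S \<subseteq> {1..n}" "i \<in> {1..n}" "h 0 = 0"
  shows "gsum h n (DS y S @ [(i, int x)]) = h (if i \<in> S then y + x else x) + real (card (S - {i})) * h y"
proof -
  have fin: "finite S" using assms finite_subset by blast
  have "gsum h n (DS y S @ [(i, int x)]) = (\<Sum>j=1..n. h ((if j \<in> S then y else 0) + (if j = i then x else 0)))"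
    unfolding gsum_def by (intro sum.cong refl) (simp only: freq_D[OF fin] nat_int abs_of_nat)
  also have "\<dots> = h (if i \<in> S then y + x else x) + (\<Sum>j\<in>{1..n}-{i}. h ((if j \<in> S then y else 0) + (if j = i then x else 0)))"
    using assms by (subst sum.remove[of _ i]) auto
  also have "(\<Sum>j\<in>{1..n}-{i}. h ((if j \<in> S then y else 0) + (if j = i then x else 0))) = (\<Sum>j\<in>{1..n}-{i}. if j \<in> S then h y else 0)"
    using assms by (intro sum.cong refl) auto
  also have "\<dots> = real (card (S - {i})) * h y"
  proof -
    have "(\<Sum>j\<in>{1..n}-{i}. if j \<in> S then h y else 0) = (\<Sum>j\<in>{j\<in>{1..n}-{i}. j \<in> S}. h y)"
      by (rule sum.inter_filter[symmetric]) simp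
    also have "{j\<in>{1..n}-{i}. j \<in> S} = S - {i}" using assms by auto
    finally show ?thesis by simp
  qed
  finally show ?thesis .
qed

lemma hard:
  fixes h :: "nat \<Rightarrow> real" and A :: alg1
  assumes h0: "h 0 = 0" and hnn: "\<And>z. h z \<ge> 0"
  and n: "n = 5*m"
  and eps: "0 \<le> \<epsilon>" "\<epsilon> \<le> 1"
  and disj: "{G. (1-\<epsilon>)*h x \<le> G \<and> G \<le> (1+\<epsilon>)*(h x + n*h y)} \<inter> {G. (1-\<epsilon>)*h (y+x) \<le> G \<and> G \<le> (1+\<epsilon>)*(h (y+x) + n*h y)} = {}"
  and sb: "space_bounded A s" and sol: "solves_sum A h \<epsilon> n (x+y)"
  shows "(2::real)^n \<le> 6 * 2 powr s * card {U. U \<subseteq> {1..n} \<and> card U \<le> 2*m}"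
proof -
  obtain Q where Q: "finite Q" "real (card Q) \<le> 2 powr s" "set_pmf (a_init A) \<subseteq> Q"
    "\<forall>q\<in>Q. \<forall>p. set_pmf (a_step A q p) \<subseteq> Q"
    using sb unfolding space_bounded_def by blast
  define I where "I v = (if v then {G. (1-\<epsilon>)*h (y+x) \<le> G \<and> G \<le> (1+\<epsilon>)*(h (y+x) + n*h y)}
     else {G. (1-\<epsilon>)*h x \<le> G \<and> G \<le> (1+\<epsilon>)*(h x + n*h y)})" for v
  define \<mu> where "\<mu> S q = pmf (st A (DS y S)) q" for S q
  define \<beta> where "\<beta> i q v = measure_pmf.prob (bind_pmf (a_step A q (i, int x)) (a_out A)) (I v)" for i q v
  have supp: "set_pmf (st A D) \<subseteq> Q" for D using st_support[OF Q(3) Q(4)] .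
  have "(2::real)^n \<le> 6 * card Q * card {U. U \<subseteq> {1..n} \<and> card U \<le> 2*m}"
  proof (rule LB[OF Q(1), of \<mu> n \<beta>])
    show "0 \<le> \<mu> S q" for S q unfolding \<mu>_def by simp
    show "(\<Sum>q\<in>Q. \<mu> S q) = 1" for S unfolding \<mu>_def using Q(1) supp by (rule sum_pmf_eq_1)
    show "0 \<le> \<beta> i q v" for i q v unfolding \<beta>_def by simp
    show "\<beta> i q True + \<beta> i q False \<le> 1" for i q
    proof -
      have "I True \<inter> I False = {}" using disj unfolding I_def by auto
      then have "\<beta> i q True + \<beta> i q False = measure_pmf.prob (bind_pmf (a_step A q (i, int x)) (a_out A)) (I True \<union> I False)"
        unfolding \<beta>_def by (subst measure_pmf.finite_measure_Union) auto
      also have "\<dots> \<le> 1" by simp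
      finally show ?thesis .
    qed
    show "n = 5*m" by (rule n)
    show "(\<Sum>q\<in>Q. \<mu> S q * \<beta> i q (i\<in>S)) \<ge> 2/3" if S: "S \<subseteq> {1..n}" and i: "i \<in> {1..n}" for S i
    proof -
      let ?D = "DS y S @ [(i, int x)]"
      define a where "a = h (if i \<in> S then y + x else x)"
      have gs: "gsum h n ?D = a + real (card (S - {i})) * h y" unfolding a_def using gsum_D[OF S i, of h y x] h0 by simp
      have "card (S - {i}) \<le> card {1..n}" using S by (intro card_mono) auto
      then have cS: "real (card (S - {i})) \<le> n" by simp
      have lo: "a \<le> gsum h n ?D" using gs hnn by simp
      have hi: "gsum h n ?D \<le> a + n * h y" using gs cS hnn by (simp add: mult_right_mono)
      have Idef: "I (i\<in>S) = {G. (1-\<epsilon>)*a \<le> G \<and> G \<le> (1+\<epsilon>)*(a + n*h y)}" unfolding I_def a_def by auto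
      have sub: "{G. (1 - \<epsilon>) * gsum h n ?D \<le> G \<and> G \<le> (1 + \<epsilon>) * gsum h n ?D} \<subseteq> I (i\<in>S)"
      proof
        fix G assume "G \<in> {G. (1 - \<epsilon>) * gsum h n ?D \<le> G \<and> G \<le> (1 + \<epsilon>) * gsum h n ?D}"
        then have G: "(1 - \<epsilon>) * gsum h n ?D \<le> G" "G \<le> (1 + \<epsilon>) * gsum h n ?D" by auto
        have "(1-\<epsilon>)*a \<le> (1 - \<epsilon>) * gsum h n ?D" using lo eps by (intro mult_left_mono) auto
        moreover have "(1 + \<epsilon>) * gsum h n ?D \<le> (1+\<epsilon>)*(a + n*h y)" using hi eps by (intro mult_left_mono) auto
        ultimately show "G \<in> I (i\<in>S)" unfolding Idef using G by auto
      qed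
      have "2/3 \<le> measure_pmf.prob (run_alg A ?D) {G. (1 - \<epsilon>) * gsum h n ?D \<le> G \<and> G \<le> (1 + \<epsilon>) * gsum h n ?D}"
        using sol valid_D[OF S i, of x y] unfolding solves_sum_def by simp
      also have "\<dots> \<le> measure_pmf.prob (run_alg A ?D) (I (i\<in>S))"
        using sub by (intro measure_pmf.finite_measure_mono) auto
      also have "\<dots> = (\<Sum>q\<in>Q. \<mu> S q * \<beta> i q (i\<in>S))"
        unfolding run_alg_snoc \<mu>_def \<beta>_def by (rule prob_bind_finite[OF Q(1) supp])
      finally show ?thesis .
    qed
  qed
  also have "\<dots> \<le> 6 * 2 powr s * card {U. U \<subseteq> {1..n} \<and> card U \<le> 2*m}"
  proof -
    have "real (card Q) * real (card {U. U \<subseteq> {1..n} \<and> card U \<le> 2*m}) \<le> 2 powr s * real (card {U. U \<subseteq> {1..n} \<and> card U \<le> 2*m})"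
      using Q(2) by (intro mult_right_mono) auto
    then show ?thesis by simp
  qed
  finally show ?thesis .
qed

lemma const_S: assumes "c > 0" shows "(\<lambda>_. c) \<in> S_class"
  unfolding S_class_def
proof (safe)
  show "0 \<le> c" using assms by simp
  show "antimono (\<lambda>_. c)" by (simp add: antimono_def)
  fix \<alpha> :: real assume a: "\<alpha> > 0"
  show "filterlim (\<lambda>x. real x powr \<alpha> * c) at_top sequentially" using a assms by real_asymp
  show "(\<lambda>x. real x powr (-\<alpha>) * c) \<longlonglongrightarrow> 0" using a assms by real_asymp
qed

lemma const_subpoly: assumes "c > 0" shows "subpoly (\<lambda>_. c)"
  unfolding subpoly_def
proof (safe)
  show "0 \<le> c" using assms by simp
  fix \<alpha> :: real assume a: "\<alpha> > 0"
  show "filterlim (\<lambda>x. x powr \<alpha> * c) at_top at_top" using a assms by real_asymp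
  show "((\<lambda>x. x powr (-\<alpha>) * c) \<longlongrightarrow> 0) at_top" using a assms by real_asymp
qed

definition choose_val :: "real \<Rightarrow> real \<Rightarrow> real \<Rightarrow> real" where
  "choose_val E b a = (if \<bar>b*E - a\<bar> \<ge> \<bar>b - a\<bar> then b*E else b)"

lemma choose_jump:
  fixes E a b :: real
  assumes E: "E > 1" and a: "a > 0" and b: "b > 0"
  defines "\<kappa> \<equiv> (E - 1) / (2*E)"
  shows "(1+\<kappa>)*a \<le> choose_val E b a \<or> (1+\<kappa>) * choose_val E b a \<le> a"
proof -
  define c where "c = choose_val E b a"
  have c1: "\<bar>c - a\<bar> \<ge> b*(E-1)/2"
  proof -
    have "b*(E-1) \<le> \<bar>b*E - a\<bar> + \<bar>b - a\<bar>" by (simp add: algebra_simps abs_triangle_ineq4[of _ "a"] abs_diff_triangle_ineq[of "b*E" a b a, simplified]) 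
    then show ?thesis unfolding c_def choose_val_def by auto
  qed
  have c2: "c \<le> b*E" "c > 0" unfolding c_def choose_val_def using b E by auto
  have k: "\<kappa> * c \<le> b*(E-1)/2"
  proof -
    have "\<kappa> * c = c * (E-1)/(2*E)" unfolding \<kappa>_def by simp
    also have "\<dots> \<le> b*E*(E-1)/(2*E)" using c2 E by (intro divide_right_mono mult_right_mono) auto
    also have "\<dots> = b*(E-1)/2" using E by (simp add: field_simps)
    finally show ?thesis .
  qed
  have kpos: "\<kappa> \<ge> 0" unfolding \<kappa>_def using E by simp
  show ?thesis
  proof (cases "c \<ge> a")
    case True
    then have "c - a \<ge> \<kappa> * c" using c1 k by auto
    then have "a \<le> (1 - \<kappa>) * c" by (simp add: algebra_simps)
    moreover have "(1+\<kappa>)*(1-\<kappa>) \<le> 1" by (simp add: algebra_simps)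
    ultimately have "(1+\<kappa>)*a \<le> (1+\<kappa>)*((1-\<kappa>)*c)" using kpos by (intro mult_left_mono) auto
    also have "\<dots> = ((1+\<kappa>)*(1-\<kappa>))*c" by (simp only: mult.assoc)
    also have "\<dots> \<le> 1*c" using \<open>(1+\<kappa>)*(1-\<kappa>) \<le> 1\<close> c2 by (intro mult_right_mono) auto
    finally show ?thesis unfolding c_def by simp
  next
    case False
    then have "a - c \<ge> \<kappa> * c" using c1 k by auto
    then show ?thesis unfolding c_def by (simp add: algebra_simps)
  qed
qed

lemma disjoint_intervals:
  fixes \<kappa> a0 a1 t :: real
  assumes k: "0 < \<kappa>" "\<kappa> < 1/2" and a0: "a0 > 0" and a1: "a1 > 0"
  and t: "0 \<le> t" "t \<le> \<kappa>/10 * a0"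
  and jump: "(1+\<kappa>)*a0 \<le> a1 \<or> (1+\<kappa>)*a1 \<le> a0"
  defines "\<epsilon> \<equiv> \<kappa>/10"
  shows "{G. (1-\<epsilon>)*a0 \<le> G \<and> G \<le> (1+\<epsilon>)*(a0 + t)} \<inter> {G. (1-\<epsilon>)*a1 \<le> G \<and> G \<le> (1+\<epsilon>)*(a1 + t)} = {}"
proof -
  have "False" if G: "(1-\<epsilon>)*a0 \<le> G" "G \<le> (1+\<epsilon>)*(a0 + t)" "(1-\<epsilon>)*a1 \<le> G" "G \<le> (1+\<epsilon>)*(a1 + t)" for G
  proof (cases "(1+\<kappa>)*a0 \<le> a1")
    case True
    have "(1-\<epsilon>)*((1+\<kappa>)*a0) \<le> (1-\<epsilon>)*a1" using True k unfolding \<epsilon>_def by (intro mult_left_mono) auto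
    also have "\<dots> \<le> (1+\<epsilon>)*(a0 + t)" using G by linarith
    also have "\<dots> \<le> (1+\<epsilon>)*(a0 + \<epsilon>*a0)" using t k unfolding \<epsilon>_def by (intro mult_left_mono) auto
    finally have "(1-\<epsilon>)*(1+\<kappa>)*a0 \<le> (1+\<epsilon>)*(1+\<epsilon>)*a0" by (simp add: algebra_simps)
    then have "(1-\<epsilon>)*(1+\<kappa>) \<le> (1+\<epsilon>)*(1+\<epsilon>)" using a0 by simp
    moreover have "(1-\<epsilon>)*(1+\<kappa>) = 1 + 9*\<kappa>/10 - \<kappa>*\<kappa>/10" unfolding \<epsilon>_def by (simp add: field_simps)
    moreover have "(1+\<epsilon>)*(1+\<epsilon>) = 1 + \<kappa>/5 + \<kappa>*\<kappa>/100" unfolding \<epsilon>_def by (simp add: field_simps)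
    moreover have "\<kappa>*\<kappa> < \<kappa>*(1/2)" using k by (intro mult_strict_left_mono) auto
    ultimately show False using k by linarith
  next
    case False
    then have J: "(1+\<kappa>)*a1 \<le> a0" using jump by auto
    have "(1-\<epsilon>)*a0 \<le> (1+\<epsilon>)*(a1 + t)" using G by linarith
    also have "\<dots> \<le> (1+\<epsilon>)*(a1 + \<epsilon>*a0)" using t k unfolding \<epsilon>_def by (intro mult_left_mono) auto
    finally have "(1+\<kappa>)*((1-\<epsilon>)*a0) \<le> (1+\<kappa>)*((1+\<epsilon>)*(a1 + \<epsilon>*a0))" using k by (intro mult_left_mono) auto
    also have "\<dots> = (1+\<epsilon>)*((1+\<kappa>)*a1) + (1+\<kappa>)*(1+\<epsilon>)*\<epsilon>*a0" by (simp add: algebra_simps)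
    also have "\<dots> \<le> (1+\<epsilon>)*a0 + (1+\<kappa>)*(1+\<epsilon>)*\<epsilon>*a0" using J k unfolding \<epsilon>_def by (intro add_right_mono mult_left_mono) auto
    finally have "(1+\<kappa>)*(1-\<epsilon>)*a0 \<le> ((1+\<epsilon>) + (1+\<kappa>)*(1+\<epsilon>)*\<epsilon>)*a0" by (simp add: algebra_simps)
    then have "(1+\<kappa>)*(1-\<epsilon>) \<le> (1+\<epsilon>) + (1+\<kappa>)*(1+\<epsilon>)*\<epsilon>" using a0 by simp
    moreover have "(1+\<kappa>)*(1-\<epsilon>) = 1 + 9*\<kappa>/10 - \<kappa>*\<kappa>/10" unfolding \<epsilon>_def by (simp add: field_simps)
    moreover have "(1+\<epsilon>) + (1+\<kappa>)*(1+\<epsilon>)*\<epsilon> = 1 + \<kappa>/5 + 11*(\<kappa>*\<kappa>)/100 + \<kappa>*\<kappa>*\<kappa>/100"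
      unfolding \<epsilon>_def by (simp add: field_simps)
    moreover have kk: "\<kappa>*\<kappa> < \<kappa>*(1/2)" using k by (intro mult_strict_left_mono) auto
    moreover have "\<kappa>*\<kappa>*\<kappa> < \<kappa>*(1/2)*\<kappa>" using k kk by (intro mult_strict_right_mono) auto
    moreover have "\<kappa>*(1/2)*\<kappa> = (\<kappa>*\<kappa>)/2" by simp
    ultimately show False using k by linarith
  qed
  then show ?thesis by blast
qed

lemma hard2:
  fixes h :: "nat \<Rightarrow> real" and A :: alg1
  assumes h0: "h 0 = 0" and hnn: "\<And>z. h z \<ge> 0"
  and n: "n = 5*m"
  and eps: "0 \<le> \<epsilon>" "\<epsilon> \<le> 1"
  and disj: "{G. (1-\<epsilon>)*h x \<le> G \<and> G \<le> (1+\<epsilon>)*(h x + n*h y)} \<inter> {G. (1-\<epsilon>)*h (y+x) \<le> G \<and> G \<le> (1+\<epsilon>)*(h (y+x) + n*h y)} = {}"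
  and sb: "space_bounded A s" and sol: "solves_sum A h \<epsilon> n (x+y)"
  shows "(3456/3125::real)^m \<le> 6 * 2 powr s"
proof -
  define B where "B = card {U. U \<subseteq> {1..n} \<and> card U \<le> 2*m}"
  have 1: "(2::real)^n \<le> 6 * 2 powr s * B" unfolding B_def by (rule hard[OF assms])
  have "B \<le> (\<Sum>k\<le>2*m. ((5*m) choose k))" unfolding B_def n by (rule card_small_subsets)
  then have "B * 2^(2*m) * 3^(3*m) \<le> (\<Sum>k\<le>2*m. ((5*m) choose k)) * 2^(2*m) * 3^(3*m)" by simp
  also have "\<dots> \<le> 5^(5*m)" by (rule binom_bound)
  finally have 2: "real (B * 2^(2*m) * 3^(3*m)) \<le> real (5^(5*m))" by (simp only: of_nat_le_iff)
  then have 2: "real B * 2^(2*m) * 3^(3*m) \<le> 5^(5*m)" by simp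
  have "(2::real)^n * (2^(2*m) * 3^(3*m)) \<le> 6 * 2 powr s * B * (2^(2*m) * 3^(3*m))"
    using 1 by (intro mult_right_mono) auto
  also have "\<dots> = 6 * 2 powr s * (real B * 2^(2*m) * 3^(3*m))" by (simp add: mult_ac)
  also have "\<dots> \<le> 6 * 2 powr s * 5^(5*m)" using 2 by (intro mult_left_mono) auto
  finally have 3: "(2::real)^n * (2^(2*m) * 3^(3*m)) \<le> 6 * 2 powr s * 5^(5*m)" .
  have p1: "(2::real)^(5*m) = 32^m" by (simp add: power_mult)
  have p2: "(2::real)^(2*m) = 4^m" by (simp add: power_mult)
  have p3: "(3::real)^(3*m) = 27^m" by (simp add: power_mult)
  have p4: "(3456::real) = 32*(4*27)" by simp
  have e1: "(2::real)^n * (2^(2*m) * 3^(3*m)) = 3456^m" unfolding n p1 p2 p3 p4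
    by (simp only: power_mult_distrib)
  have e2: "(5::real)^(5*m) = 3125^m" by (simp add: power_mult)
  have "(3456/3125::real)^m = 3456^m / 3125^m" by (simp add: power_divide)
  also have "\<dots> \<le> 6 * 2 powr s" using 3 e1 e2 by (simp add: divide_le_eq)
  finally show ?thesis .
qed

definition pick :: "(nat \<Rightarrow> real) \<Rightarrow> real \<Rightarrow> real \<Rightarrow> nat \<times> nat" where
  "pick g \<alpha> N = (SOME p. fst p < snd p \<and> real (snd p) \<ge> N \<and> g (snd p) \<le> g (fst p) / real (snd p) powr \<alpha>)"

primrec pseq :: "(nat \<Rightarrow> real) \<Rightarrow> real \<Rightarrow> nat \<Rightarrow> nat \<times> nat" where
  "pseq g \<alpha> 0 = pick g \<alpha> 1"
| "pseq g \<alpha> (Suc k) = pick g \<alpha> (real (fst (pseq g \<alpha> k) + snd (pseq g \<alpha> k) + k + 1))"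

locale constr =
  fixes g :: "nat \<Rightarrow> real" and \<alpha> E :: real
  assumes gG: "g \<in> G_class" and apos: "\<alpha> > 0"
  and per: "\<forall>N>0. \<exists>x y. x < y \<and> real y \<ge> N \<and> g y \<le> g x / real y powr \<alpha>"
  and E: "E > 1"
begin

definition X where "X k = fst (pseq g \<alpha> k)"
definition Y where "Y k = snd (pseq g \<alpha> k)"
definition Z where "Z k = X k + Y k"

lemma pick_prop:
  assumes "N > 0"
  shows "fst (pick g \<alpha> N) < snd (pick g \<alpha> N) \<and> real (snd (pick g \<alpha> N)) \<ge> N \<and>
         g (snd (pick g \<alpha> N)) \<le> g (fst (pick g \<alpha> N)) / real (snd (pick g \<alpha> N)) powr \<alpha>"
proof -
  obtain x y where "x < y \<and> real y \<ge> N \<and> g y \<le> g x / real y powr \<alpha>" using per assms by blast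
  then have "\<exists>p. fst p < snd p \<and> real (snd p) \<ge> N \<and> g (snd p) \<le> g (fst p) / real (snd p) powr \<alpha>"
    by (intro exI[of _ "(x,y)"]) auto
  then show ?thesis unfolding pick_def by (rule someI_ex)
qed

lemma XY: "X k < Y k" "g (Y k) \<le> g (X k) / real (Y k) powr \<alpha>"
proof -
  have "fst (pseq g \<alpha> k) < snd (pseq g \<alpha> k) \<and> g (snd (pseq g \<alpha> k)) \<le> g (fst (pseq g \<alpha> k)) / real (snd (pseq g \<alpha> k)) powr \<alpha>"
    by (cases k) (use pick_prop[of 1] pick_prop[of "real (fst (pseq g \<alpha> _) + snd (pseq g \<alpha> _) + _ + 1)"] in auto)
  then show "X k < Y k" "g (Y k) \<le> g (X k) / real (Y k) powr \<alpha>" unfolding X_def Y_def by auto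
qed

lemma Y_Suc: "real (Y (Suc k)) \<ge> real (Z k + k + 1)"
  using pick_prop[of "real (fst (pseq g \<alpha> k) + snd (pseq g \<alpha> k) + k + 1)"]
  unfolding Y_def Z_def X_def by simp

lemma Y_ge: "Y k \<ge> k + 1"
proof (cases k)
  case 0
  have "real (Y 0) \<ge> 1" using pick_prop[of 1] unfolding Y_def by simp
  then show ?thesis using 0 by simp
next
  case (Suc j)
  have "Z j \<ge> 1" using XY(1)[of j] unfolding Z_def by simp
  then show ?thesis using Y_Suc[of j] Suc by simp
qed

lemma Z_less_Y: "Z k < Y (Suc k)" using Y_Suc[of k] by simp

lemma X_pos: "X k \<ge> 1"
proof (rule ccontr)
  assume "\<not> X k \<ge> 1" then have "X k = 0" by simp
  then have "g (Y k) \<le> 0" using XY(2)[of k] gG unfolding G_class_def by simp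
  moreover have "g (Y k) > 0" using gG Y_ge[of k] unfolding G_class_def by simp
  ultimately show False by simp
qed

lemma Z_mono: "k < j \<Longrightarrow> Z k < Z j"
proof (induction j)
  case 0 then show ?case by simp
next
  case (Suc j)
  have "Z j < Z (Suc j)" using Z_less_Y[of j] unfolding Z_def[of "Suc j"] by simp
  then show ?case using Suc by (cases "k = j") auto
qed

lemma Z_ge: "Z k \<ge> k + 2" "Z k \<ge> 3"
proof -
  have "Y k \<ge> X k + 1" using XY(1)[of k] by simp
  then show "Z k \<ge> k + 2" "Z k \<ge> 3" using X_pos[of k] Y_ge[of k] unfolding Z_def by simp_all
qed

primrec Hs :: "nat \<Rightarrow> nat \<Rightarrow> real" where
  "Hs 0 = g"
| "Hs (Suc k) = (Hs k)(Z k := choose_val E (g (Z k)) (Hs k (X k)))"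

definition hh :: "nat \<Rightarrow> real" where "hh w = Hs (Suc w) w"

lemma Hs_cases: "Hs k w = g w \<or> Hs k w = g w * E"
proof (induction k)
  case 0 then show ?case by simp
next
  case (Suc k) then show ?case by (auto simp: choose_val_def)
qed

lemma Hs_stable: "(\<And>i. a \<le> i \<Longrightarrow> Z i \<noteq> w) \<Longrightarrow> a \<le> j \<Longrightarrow> Hs j w = Hs a w"
proof (induction j)
  case 0 then show ?case by simp
next
  case (Suc j)
  show ?case
  proof (cases "a = Suc j")
    case True then show ?thesis by simp
  next
    case False
    then have "a \<le> j" using Suc.prems by simp
    then have "Z j \<noteq> w" using Suc.prems(1) by blast
    then show ?thesis using Suc.IH[OF Suc.prems(1) \<open>a \<le> j\<close>] by simp
  qed
qed

lemma hh_cases: "hh w = g w \<or> hh w = g w * E" unfolding hh_def by (rule Hs_cases)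

lemma hh_small: "w < 3 \<Longrightarrow> hh w = g w"
proof -
  assume w: "w < 3"
  have "Hs (Suc w) w = Hs 0 w"
  proof (rule Hs_stable)
    fix i show "Z i \<noteq> w" using Z_ge(2)[of i] w by simp
  qed simp
  then show ?thesis unfolding hh_def by simp
qed

lemma hh_X: "hh (X k) = Hs k (X k)"
proof -
  define a where "a = min k (Suc (X k))"
  have ne: "Z i \<noteq> X k" if "a \<le> i" for i
  proof (cases "k \<le> i")
    case True
    then have "Z k \<le> Z i" using Z_mono[of k i] by (cases "k = i") auto
    then show ?thesis unfolding Z_def using Y_ge[of k] by simp
  next
    case False
    then have "Suc (X k) \<le> i" using that unfolding a_def by simp
    then show ?thesis using Z_ge(1)[of i] by simp
  qed
  have "Hs k (X k) = Hs a (X k)" by (rule Hs_stable[OF ne]) (auto simp: a_def)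
  moreover have "Hs (Suc (X k)) (X k) = Hs a (X k)" by (rule Hs_stable[OF ne]) (auto simp: a_def)
  ultimately show ?thesis unfolding hh_def by simp
qed

lemma hh_Z: "hh (Z k) = choose_val E (g (Z k)) (hh (X k))"
proof -
  have ne: "Z i \<noteq> Z k" if "Suc k \<le> i" for i using Z_mono[of k i] that by simp
  have "hh (Z k) = Hs (Suc k) (Z k)" unfolding hh_def by (rule Hs_stable[OF ne]) (use Z_ge(1)[of k] in auto)
  also have "\<dots> = choose_val E (g (Z k)) (Hs k (X k))" by simp
  also have "\<dots> = choose_val E (g (Z k)) (hh (X k))" by (simp only: hh_X)
  finally show ?thesis .
qed

end

context constr
begin

definition \<kappa> where "\<kappa> = (E - 1) / (2*E)"

lemma kappa: "0 < \<kappa>" "\<kappa> < 1/2"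
  unfolding \<kappa>_def using E by (auto simp: field_simps)

lemma gpos: "w > 0 \<Longrightarrow> g w > 0" and g0: "g 0 = 0" and g1: "g 1 = 1"
  using gG unfolding G_class_def by auto

lemma hh_basic: "g w \<le> hh w" "hh w \<le> E * g w" "hh 0 = 0" "hh 1 = 1" "hh w \<ge> 0"
proof -
  have gn: "g w \<ge> 0" using gpos[of w] g0 by (cases "w = 0") auto
  show "g w \<le> hh w" "hh w \<le> E * g w" using hh_cases[of w] E gn by (auto simp: mult_le_cancel_right1 mult.commute)
  show "hh 0 = 0" "hh 1 = 1" using hh_small[of 0] hh_small[of 1] g0 g1 by auto
  show "hh w \<ge> 0" using hh_cases[of w] E gn by auto
qed

lemma hh_pos: "w > 0 \<Longrightarrow> hh w > 0" using hh_basic(1)[of w] gpos[of w] by simp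

lemma hh_G: "hh \<in> G_class" unfolding G_class_def using hh_basic hh_pos by auto

lemma jump: "(1+\<kappa>) * hh (X k) \<le> hh (Z k) \<or> (1+\<kappa>) * hh (Z k) \<le> hh (X k)"
  unfolding hh_Z \<kappa>_def
  by (rule choose_jump[OF E hh_pos gpos]) (use X_pos[of k] Z_ge(2)[of k] in auto)

lemma key: "hh (Y k) * real (Y k) powr \<alpha> \<le> E * hh (X k)"
proof -
  have yp: "real (Y k) powr \<alpha> > 0" using Y_ge[of k] by simp
  have "g (Y k) * real (Y k) powr \<alpha> \<le> g (X k)" using XY(2)[of k] yp by (simp add: pos_le_divide_eq)
  have "hh (Y k) * real (Y k) powr \<alpha> \<le> E * g (Y k) * real (Y k) powr \<alpha>"
    using hh_basic(2)[of "Y k"] yp by (intro mult_right_mono) auto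
  also have "\<dots> = E * (g (Y k) * real (Y k) powr \<alpha>)" by simp
  also have "\<dots> \<le> E * g (X k)" using \<open>g (Y k) * real (Y k) powr \<alpha> \<le> g (X k)\<close> E by (intro mult_left_mono) auto
  also have "\<dots> \<le> E * hh (X k)" using hh_basic(1)[of "X k"] E by (intro mult_left_mono) auto
  finally show ?thesis .
qed

lemma theta: "Theta g hh \<le> ereal (ln E)"
  unfolding Theta_def
proof (rule SUP_least)
  fix w :: nat assume "w \<in> {1..}"
  then have "g w > 0" using gpos by simp
  then show "ereal \<bar>ln (g w) - ln (hh w)\<bar> \<le> ereal (ln E)"
    using hh_cases[of w] E by (auto simp: ln_mult)
qed

lemma normal_hh: "normal S_class hh"
  unfolding normal_def nearly_periodic_def
proof
  assume np: "(\<exists>\<alpha>>0. \<forall>N>0. \<exists>x y. x < y \<and> N \<le> real y \<and> hh y \<le> hh x / real y powr \<alpha>) \<and>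
    (\<forall>\<alpha>>0. \<forall>h\<in>S_class. \<exists>N1>0. \<forall>y x. alpha_period hh \<alpha> y \<and> N1 \<le> real y \<and> x < y \<and> hh y * real y powr \<alpha> \<le> hh x \<longrightarrow>
          \<bar>hh (x + y) - hh x\<bar> \<le> min (hh x) (hh (x + y)) * h y)"
  have a2: "\<alpha>/2 > 0" using apos by simp
  have cS: "(\<lambda>_. \<kappa>/2) \<in> S_class" using const_S kappa by simp
  obtain N1 where N1: "N1 > 0" and H: "\<And>y x. alpha_period hh (\<alpha>/2) y \<and> N1 \<le> real y \<and> x < y \<and> hh y * real y powr (\<alpha>/2) \<le> hh x \<Longrightarrow>
          \<bar>hh (x + y) - hh x\<bar> \<le> min (hh x) (hh (x + y)) * (\<kappa>/2)"
  proof -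
    have "\<exists>N1>0. \<forall>y x. alpha_period hh (\<alpha>/2) y \<and> N1 \<le> real y \<and> x < y \<and> hh y * real y powr (\<alpha>/2) \<le> hh x \<longrightarrow>
          \<bar>hh (x + y) - hh x\<bar> \<le> min (hh x) (hh (x + y)) * (\<lambda>_. \<kappa>/2) y"
      using bspec[OF mp[OF spec[OF conjunct2[OF np], of "\<alpha>/2"] a2] cS] .
    then show ?thesis using that by auto
  qed
  define k where "k = nat \<lceil>max N1 (E powr (2/\<alpha>))\<rceil>"
  define x where "x = X k"
  define y where "y = Y k"
  have yk: "real y \<ge> max N1 (E powr (2/\<alpha>))"
  proof -
    have "max N1 (E powr (2/\<alpha>)) \<le> real k" unfolding k_def by linarith
    also have "\<dots> \<le> real y" using Y_ge[of k] unfolding y_def by simp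
    finally show ?thesis .
  qed
  define q where "q = real y powr (\<alpha>/2)"
  have qE: "q \<ge> E"
  proof -
    have "E = (E powr (2/\<alpha>)) powr (\<alpha>/2)" using E apos by (simp add: powr_powr)
    also have "\<dots> \<le> q" unfolding q_def using yk apos by (intro powr_mono2) auto
    finally show ?thesis .
  qed
  have qpos: "q > 0" using qE E by simp
  have yq: "real y powr \<alpha> = q * q" unfolding q_def by (simp flip: powr_add)
  have "hh y * (q * q) \<le> E * hh x" using key[of k] yq unfolding x_def y_def by simp
  also have "\<dots> \<le> q * hh x" using qE hh_basic(5)[of x] by (intro mult_right_mono) auto
  finally have "(hh y * q) * q \<le> hh x * q" by (simp add: mult_ac)
  then have hq: "hh y * q \<le> hh x" using qpos by simp
  have ap: "alpha_period hh (\<alpha>/2) y"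
    unfolding alpha_period_def using hq qpos XY(1)[of k] unfolding x_def y_def q_def
    by (intro exI[of _ "X k"]) (auto simp: pos_le_divide_eq)
  have "\<bar>hh (x + y) - hh x\<bar> \<le> min (hh x) (hh (x + y)) * (\<kappa>/2)"
    by (rule H) (use ap yk hq XY(1)[of k] in \<open>auto simp: x_def y_def q_def\<close>)
  moreover have xy: "x + y = Z k" unfolding x_def y_def Z_def by simp
  moreover have "hh x > 0" "hh (Z k) > 0" using hh_pos X_pos[of k] Z_ge(2)[of k] unfolding x_def by auto
  ultimately have d: "\<bar>hh (Z k) - hh x\<bar> \<le> min (hh x) (hh (Z k)) * (\<kappa>/2)" and ap: "hh x > 0" and bp: "hh (Z k) > 0" by auto
  define a where "a = hh x"
  define b where "b = hh (Z k)"
  have d': "\<bar>b - a\<bar> \<le> min a b * (\<kappa>/2)" using d unfolding a_def b_def .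
  have J: "(1+\<kappa>) * a \<le> b \<or> (1+\<kappa>) * b \<le> a" using jump[of k] unfolding a_def b_def x_def .
  have ka: "\<kappa> * a > 0" "\<kappa> * b > 0" using kappa ap bp unfolding a_def b_def by auto
  have e1: "(1+\<kappa>) * a = a + \<kappa>*a" "(1+\<kappa>) * b = b + \<kappa>*b" by (simp_all add: algebra_simps)
  have e2: "a * (\<kappa>/2) = (\<kappa>*a)/2" "b * (\<kappa>/2) = (\<kappa>*b)/2" by simp_all
  show False
  proof (cases "(1+\<kappa>) * a \<le> b")
    case True
    then have "a \<le> b" using e1 ka by linarith
    then have "min a b = a" "\<bar>b - a\<bar> = b - a" by auto
    then show False using d' True e1 e2 ka by linarith
  next
    case False
    then have T: "(1+\<kappa>) * b \<le> a" using J by auto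
    then have "b \<le> a" using e1 ka by linarith
    then have "min a b = b" "\<bar>b - a\<bar> = a - b" by auto
    then show False using d' T e1 e2 ka by linarith
  qed
qed

end

context constr
begin

lemma not_tract: "\<not> one_pass_tractable hh"
proof
  assume tr: "one_pass_tractable hh"
  have sp: "subpoly (\<lambda>_. 10/\<kappa>)" by (rule const_subpoly) (use kappa in simp)
  have epsc: "\<forall>n M. (\<lambda>n M. \<kappa>/10) n M \<ge> 1 / (\<lambda>_. 10/\<kappa>) (real (n * M))" by simp
  obtain hs where hs: "subpoly hs" and alg: "\<And>n M. n \<ge> 1 \<Longrightarrow> M \<ge> 1 \<Longrightarrow> \<exists>A. space_bounded A (hs (real (n*M))) \<and> solves_sum A hh (\<kappa>/10) n M"
    using mp[OF spec[OF spec[OF tr[unfolded one_pass_tractable_def], of "\<lambda>_. 10/\<kappa>"], of "\<lambda>n M. \<kappa>/10"] conjI[OF sp epsc]]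
    by auto
  define \<beta> where "\<beta> = \<alpha>/(4+2*\<alpha>)"
  have bpos: "\<beta> > 0" unfolding \<beta>_def using apos by simp
  have lim: "((\<lambda>u. u powr (-\<beta>) * hs u) \<longlongrightarrow> 0) at_top" using hs bpos unfolding subpoly_def by blast
  have "eventually (\<lambda>u. u powr (-\<beta>) * hs u < 1) at_top" by (rule order_tendstoD(2)[OF lim]) simp
  then obtain U0 where U0: "\<And>u. u \<ge> U0 \<Longrightarrow> u powr (-\<beta>) * hs u < 1" by (auto simp: eventually_at_top_linorder)
  have hsb: "hs u \<le> u powr \<beta>" if "u \<ge> max U0 1" for u
  proof -
    have up: "u > 0" using that by simp
    have "u powr \<beta> * (u powr (-\<beta>) * hs u) \<le> u powr \<beta> * 1"
      using U0[of u] that by (intro mult_left_mono) auto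
    moreover have "u powr \<beta> * (u powr (-\<beta>) * hs u) = hs u"
      using up by (simp add: mult.assoc[symmetric] powr_add[symmetric])
    ultimately show ?thesis by simp
  qed
  define c where "c = log 2 (3456/3125)"
  have cpos: "c > 0" unfolding c_def by simp
  define L6 where "L6 = log 2 6"
  have L6pos: "L6 > 0" unfolding L6_def by simp
  define K where "K = 10 powr \<beta> + L6 + c"
  define W1 where "W1 = max 1 (max ((K+c)/c + 1) (50*E/\<kappa>))"
  define T where "T = max (max U0 1) (W1 powr (4/\<alpha>))"
  define k where "k = nat \<lceil>T\<rceil>"
  define x where "x = X k"
  define y where "y = Y k"
  have yT: "real y \<ge> T"
  proof -
    have "T \<le> real k" unfolding k_def by linarith
    also have "\<dots> \<le> real y" using Y_ge[of k] unfolding y_def by simp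
    finally show ?thesis .
  qed
  have y1: "real y \<ge> 1" using yT unfolding T_def by simp
  define p where "p = real y powr (\<alpha>/4)"
  have pW: "p \<ge> W1"
  proof -
    have W1pos: "W1 > 0" unfolding W1_def by simp
    have "W1 = (W1 powr (4/\<alpha>)) powr (\<alpha>/4)" using W1pos apos by (simp add: powr_powr)
    also have "\<dots> \<le> p" unfolding p_def using yT apos unfolding T_def by (intro powr_mono2) auto
    finally show ?thesis .
  qed
  have p1: "p \<ge> 1" and pK: "p \<ge> (K+c)/c + 1" and pE: "p \<ge> 50*E/\<kappa>" using pW unfolding W1_def by auto
  have pp: "real y powr (\<alpha>/2) = p*p" unfolding p_def by (simp flip: powr_add)
  have p4: "real y powr \<alpha> = (p*p)*(p*p)" unfolding pp[symmetric] by (simp flip: powr_add)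
  have "p*1 \<le> p*p" using p1 by (intro mult_left_mono) auto
  then have ppp: "p*p \<ge> p" by simp
  define m where "m = nat \<lfloor>p*p\<rfloor>"
  have m_le: "real m \<le> p*p" and m_ge: "real m \<ge> p*p - 1" unfolding m_def using p1 ppp by linarith+
  have m1: "m \<ge> 1" unfolding m_def using p1 ppp by linarith
  define n where "n = 5*m"
  define M where "M = x + y"
  have n1: "n \<ge> 1" and M1: "M \<ge> 1" using m1 y1 unfolding n_def M_def by auto
  obtain A where A: "space_bounded A (hs (real (n*M)))" "solves_sum A hh (\<kappa>/10) n M" using alg[OF n1 M1] by blast
  have hx: "hh x > 0" unfolding x_def using hh_pos X_pos[of k] by simp
  have keyp: "hh y * ((p*p)*(p*p)) \<le> E * hh x" using key[of k] p4 unfolding x_def y_def by simp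
  have t0: "0 \<le> real n * hh y" using hh_basic(5) by simp
  have t1: "real n * hh y \<le> \<kappa>/10 * hh x"
  proof -
    have "real n * hh y \<le> 5*(p*p) * hh y" unfolding n_def using m_le hh_basic(5)[of y] by (intro mult_right_mono) auto
    moreover have "(5*(p*p) * hh y) * (p*p) \<le> (\<kappa>/10 * hh x) * (p*p)"
    proof -
      have "(5*(p*p) * hh y) * (p*p) = 5 * (hh y * ((p*p)*(p*p)))" by (simp add: mult_ac)
      also have "\<dots> \<le> 5 * (E * hh x)" using keyp by simp
      also have "\<dots> = (\<kappa>/10 * hh x) * (50*E/\<kappa>)" using kappa by (simp add: field_simps)
      also have "\<dots> \<le> (\<kappa>/10 * hh x) * (p*p)" using pE ppp kappa hx by (intro mult_left_mono) auto
      finally show ?thesis .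
    qed
    then have "5*(p*p) * hh y \<le> \<kappa>/10 * hh x" using p1 by (simp add: mult_le_cancel_right mult_ac)
    ultimately show ?thesis by linarith
  qed
  have yx: "y + x = Z k" unfolding x_def y_def Z_def by simp
  have jz: "(1+\<kappa>) * hh x \<le> hh (y+x) \<or> (1+\<kappa>) * hh (y+x) \<le> hh x" using jump[of k] yx[unfolded x_def] unfolding x_def by simp
  have hz: "hh (y+x) > 0" unfolding yx using hh_pos Z_ge(2)[of k] by simp
  have disj: "{G. (1-\<kappa>/10)*hh x \<le> G \<and> G \<le> (1+\<kappa>/10)*(hh x + n*hh y)} \<inter> {G. (1-\<kappa>/10)*hh (y+x) \<le> G \<and> G \<le> (1+\<kappa>/10)*(hh (y+x) + n*hh y)} = {}"
    by (rule disjoint_intervals[OF kappa hx hz t0 t1 jz])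
  define s where "s = hs (real (n*M))"
  have r: "(3456/3125::real)^m \<le> 6 * 2 powr s"
    by (rule hard2[of hh n m "\<kappa>/10" x y A s]) (use hh_basic kappa disj A in \<open>auto simp: n_def M_def s_def\<close>)
  define u where "u = real (n*M)"
  have uy: "u \<ge> real y"
  proof -
    have "real y \<le> real M" unfolding M_def by simp
    moreover have "1 \<le> real n" using n1 by simp
    ultimately have "1 * real y \<le> real n * real M" by (intro mult_mono) auto
    then show ?thesis unfolding u_def by simp
  qed
  have u_le: "u \<le> 10 * (real y * (p*p))"
  proof -
    have "u = real n * real M" unfolding u_def by simp
    also have "\<dots> \<le> (5*(p*p)) * (2 * real y)" unfolding n_def M_def using m_le XY(1)[of k] unfolding x_def y_def
      by (intro mult_mono) auto
    finally show ?thesis by (simp add: mult_ac)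
  qed
  have s_le: "s \<le> 10 powr \<beta> * p"
  proof -
    have "s \<le> u powr \<beta>" unfolding s_def u_def[symmetric] using uy yT unfolding T_def by (intro hsb) auto
    also have "\<dots> \<le> (10 * (real y * (p*p))) powr \<beta>" using u_le bpos uy y1 by (intro powr_mono2) auto
    also have "\<dots> = 10 powr \<beta> * (real y powr (1 + \<alpha>/2)) powr \<beta>"
      using y1 by (simp add: powr_mult powr_add pp)
    also have "(real y powr (1 + \<alpha>/2)) powr \<beta> = p"
    proof -
      have ex: "(1 + \<alpha>/2) * \<alpha> / (4+2*\<alpha>) = \<alpha>/4" using apos by (simp add: field_simps)
      show ?thesis unfolding p_def \<beta>_def by (simp only: powr_powr times_divide_eq_right ex)
    qed
    finally show ?thesis by simp
  qed
  have "(2::real) powr (c * real m) = (2 powr c) powr real m" by (simp add: powr_powr)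
  also have "(2::real) powr c = 3456/3125" unfolding c_def by simp
  also have "(3456/3125::real) powr real m = (3456/3125::real)^m" by (simp add: powr_realpow)
  also have "\<dots> \<le> 6 * 2 powr s" by (rule r)
  also have "\<dots> = 2 powr (L6 + s)" unfolding L6_def by (simp add: powr_add)
  finally have "c * real m \<le> L6 + s" by simp
  then have A1: "c * real m \<le> L6 + 10 powr \<beta> * p" using s_le by linarith
  have "c * (p*p - 1) \<le> c * real m" using m_ge cpos by (intro mult_left_mono) auto
  moreover have "c * p \<ge> K + 2*c"
  proof -
    have "c * p \<ge> c * ((K+c)/c + 1)" using pK cpos by (intro mult_left_mono) auto
    also have "c * ((K+c)/c + 1) = K + 2*c" using cpos by (simp add: field_simps)
    finally show ?thesis .
  qed
  then have "(c * p) * p \<ge> (K + 2*c) * p" using p1 by (intro mult_right_mono) auto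
  then have F1: "c * (p*p) \<ge> (K + 2*c) * p" by (simp add: mult.assoc)
  have F2: "(K + 2*c) * p = 10 powr \<beta> * p + L6 * p + 3 * (c * p)" unfolding K_def by (simp add: algebra_simps)
  have F3: "c \<le> c * p" using cpos p1 by simp
  have F4: "L6 \<le> L6 * p" using L6pos p1 by simp
  have F5: "c * p > 0" using cpos p1 by simp
  have F6: "c * (p*p - 1) = c * (p*p) - c" by (simp add: algebra_simps)
  have "c * (p*p - 1) > L6 + 10 powr \<beta> * p" using F1 F2 F3 F4 F5 F6 by linarith
  moreover have "c * (p*p - 1) \<le> c * real m" using m_ge cpos by (intro mult_left_mono) auto
  ultimately show False using A1 by linarith
qed

end

theorem theorem64:
  fixes g :: "nat \<Rightarrow> real"
  assumes "g \<in> G_class" and "nearly_periodic S_class g"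
  shows "\<forall>\<delta>>0. \<exists>h\<in>G_class. normal S_class h \<and> \<not> one_pass_tractable h \<and> Theta g h \<le> ereal \<delta>"
proof (intro allI impI)
  fix \<delta> :: real assume d: "\<delta> > 0"
  obtain \<alpha> where a: "\<alpha> > 0" and per: "\<forall>N>0. \<exists>x y. x < y \<and> real y \<ge> N \<and> g y \<le> g x / real y powr \<alpha>"
    using assms(2) unfolding nearly_periodic_def by blast
  interpret C: constr g \<alpha> "exp \<delta>"
    by unfold_locales (use assms(1) a per d in auto)
  have "Theta g C.hh \<le> ereal \<delta>" using C.theta by simp
  then show "\<exists>h\<in>G_class. normal S_class h \<and> \<not> one_pass_tractable h \<and> Theta g h \<le> ereal \<delta>"
    using C.hh_G C.normal_hh C.not_tract by blast
qed

end
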